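(* Let $d\ge 1$ and $n\ge 0$ be integers, let $N:=\dim \mathbb{C}_n[z]$, where $\mathbb{C}_n[z]$ denotes the space of polynomials in $d$ complex variables of total degree at most $n$, and let $A=\{x_1,\dots,x_N\}\subset\mathbb{C}^d$ be a set of $N$ distinct points that is unisolvent for polynomial interpolation, i.e. for all $y_1,\dots,y_N\in\mathbb{C}$ there is a unique $p\in\mathbb{C}_n[z]$ with $p(x_i)=y_i$ for $1\le i\le N$. Let $z_0\in\mathbb{C}^d\setminus A$, and let $\ell_1,\dots,\ell_N\in\mathbb{C}_n[z]$ be the fundamental Lagrange interpolating polynomials for these points ($\ell_i(x_j)=\delta_{ij}$). Then among all discrete probability measures supported at the points $x_1,\dots,x_N$, the measure $\mu=\sum_{i=1}^N w_i\delta_{x_i}$ with \[ w_i:=\frac{|\ell_i(z_0)|}{\sum_{j=1}^N|\ell_j(z_0)|},\qquad 1\le i\le N, \] minimizes $K_n^\mu(z_0,z_0)$.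
   Context: For a probability measure $\mu$ that is non-degenerate on $\mathbb{C}_n[z]$ (i.e. $\int|p|^2\,d\mu>0$ for every nonzero $p\in\mathbb{C}_n[z]$), $K_n^\mu(z,z):=\sum_{k=1}^N|q_k(z)|^2$, where $\{q_1,\dots,q_N\}$ is a $\mu$-orthonormal basis of $\mathbb{C}_n[z]$ (the reciprocal of the Christoffel function, or Bergman kernel, of $\mu$ on the diagonal). *)

theory Defs
  imports "HOL-Probability.Probability"
begin

text \<open>Points of C^d are vectors of type complex ^ 'd (d = CARD('d) >= 1).
  Multi-indices are functions 'd => nat; a polynomial of total degree <= n is
  represented by its polynomial function.\<close>

definition monomial :: "('d::finite \<Rightarrow> nat) \<Rightarrow> complex ^ 'd \<Rightarrow> complex" where
  "monomial \<alpha> z = (\<Prod>i\<in>UNIV. (z $ i) ^ (\<alpha> i))"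

definition multi_indices :: "nat \<Rightarrow> ('d::finite \<Rightarrow> nat) set" where
  "multi_indices n = {\<alpha>. sum \<alpha> UNIV \<le> n}"

definition polys :: "nat \<Rightarrow> (complex ^ 'd::finite \<Rightarrow> complex) set" where
  "polys n = {p. \<exists>c :: ('d \<Rightarrow> nat) \<Rightarrow> complex.
                   p = (\<lambda>z. \<Sum>\<alpha>\<in>multi_indices n. c \<alpha> * monomial \<alpha> z)}"

definition dimP :: "'d::finite itself \<Rightarrow> nat \<Rightarrow> nat" where
  "dimP _ n = card (multi_indices n :: ('d \<Rightarrow> nat) set)"

definition ip :: "(complex ^ 'd::finite) measure \<Rightarrow> (complex ^ 'd \<Rightarrow> complex)
                   \<Rightarrow> (complex ^ 'd \<Rightarrow> complex) \<Rightarrow> complex" where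
  "ip M p q = (LINT z|M. p z * cnj (q z))"

definition nondegenerate :: "(complex ^ 'd::finite) measure \<Rightarrow> nat \<Rightarrow> bool" where
  "nondegenerate M n \<longleftrightarrow>
     (\<forall>p \<in> polys n. p \<noteq> (\<lambda>_. 0) \<longrightarrow> (LINT z|M. (cmod (p z))\<^sup>2) > 0)"

text \<open>q_1..q_N (indexed 0..N-1) is an M-orthonormal basis of C_n[z].\<close>
definition is_onb :: "(complex ^ 'd::finite) measure \<Rightarrow> nat
                      \<Rightarrow> (nat \<Rightarrow> complex ^ 'd \<Rightarrow> complex) \<Rightarrow> bool" where
  "is_onb M n q \<longleftrightarrow>
     (\<forall>k < dimP TYPE('d) n. q k \<in> polys n) \<and>
     (\<forall>k < dimP TYPE('d) n. \<forall>l < dimP TYPE('d) n. ip M (q k) (q l) = (if k = l then 1 else 0)) \<and>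
     (\<forall>p \<in> polys n. \<exists>c. p = (\<lambda>z. \<Sum>k < dimP TYPE('d) n. c k * q k z))"

text \<open>K_n^mu(z,z) = sum_k |q_k(z)|^2 for a mu-orthonormal basis (meaningful for
  non-degenerate mu; independent of the choice of basis).\<close>
definition Kn :: "(complex ^ 'd::finite) measure \<Rightarrow> nat \<Rightarrow> complex ^ 'd \<Rightarrow> real" where
  "Kn M n z = (let q = (SOME q. is_onb M n q) in \<Sum>k < dimP TYPE('d) n. (cmod (q k z))\<^sup>2)"

end

theory Submission
  imports Defs
begin


lemma finite_multi_indices: "finite (multi_indices n :: ('d::finite \<Rightarrow> nat) set)"
proof -
  have "multi_indices n \<subseteq> (Pi\<^sub>E (UNIV::'d set) (\<lambda>_. {..n}))"
  proof
    fix \<alpha> :: "'d \<Rightarrow> nat" assume "\<alpha> \<in> multi_indices n"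
    then have s: "sum \<alpha> UNIV \<le> n" by (simp add: multi_indices_def)
    have "\<alpha> i \<le> n" for i
      using member_le_sum[of i UNIV \<alpha>] s by simp
    then show "\<alpha> \<in> Pi\<^sub>E UNIV (\<lambda>_. {..n})" by (simp add: PiE_UNIV_domain)
  qed
  moreover have "finite (Pi\<^sub>E (UNIV::'d set) (\<lambda>_. {..n}))"
    by (rule finite_PiE) auto
  ultimately show ?thesis by (rule finite_subset)
qed

lemma polys_lincomb:
  assumes "finite I" "\<forall>i\<in>I. f i \<in> polys n"
  shows "(\<lambda>z. \<Sum>i\<in>I. c i * f i z) \<in> polys n"
proof -
  from assms(2) have "\<forall>i\<in>I. \<exists>cf. f i = (\<lambda>z. \<Sum>\<alpha>\<in>multi_indices n. cf \<alpha> * monomial \<alpha> z)"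
    by (simp add: polys_def)
  then obtain cf where cf: "\<forall>i\<in>I. f i = (\<lambda>z. \<Sum>\<alpha>\<in>multi_indices n. cf i \<alpha> * monomial \<alpha> z)"
    by metis
  have "(\<lambda>z. \<Sum>i\<in>I. c i * f i z) = (\<lambda>z. \<Sum>\<alpha>\<in>multi_indices n. (\<Sum>i\<in>I. c i * cf i \<alpha>) * monomial \<alpha> z)"
  proof
    fix z
    have "(\<Sum>i\<in>I. c i * f i z) = (\<Sum>i\<in>I. \<Sum>\<alpha>\<in>multi_indices n. c i * cf i \<alpha> * monomial \<alpha> z)"
      using cf by (auto simp: sum_distrib_left mult.assoc intro!: sum.cong)
    also have "\<dots> = (\<Sum>\<alpha>\<in>multi_indices n. \<Sum>i\<in>I. c i * cf i \<alpha> * monomial \<alpha> z)"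
      by (rule sum.swap)
    also have "\<dots> = (\<Sum>\<alpha>\<in>multi_indices n. (\<Sum>i\<in>I. c i * cf i \<alpha>) * monomial \<alpha> z)"
      by (simp add: sum_distrib_right)
    finally show "(\<Sum>i\<in>I. c i * f i z) = (\<Sum>\<alpha>\<in>multi_indices n. (\<Sum>i\<in>I. c i * cf i \<alpha>) * monomial \<alpha> z)" .
  qed
  then show ?thesis unfolding polys_def mem_Collect_eq
    by (rule exI[of _ "\<lambda>\<alpha>. \<Sum>i\<in>I. c i * cf i \<alpha>"])
qed

lemma const1_polys: "(\<lambda>_. 1) \<in> (polys n :: (complex ^ 'd::finite \<Rightarrow> complex) set)"
proof -
  have z: "(\<lambda>_. 0) \<in> (multi_indices n :: ('d \<Rightarrow> nat) set)" by (simp add: multi_indices_def)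
  have "(\<lambda>_. 1) = (\<lambda>z::complex^'d. \<Sum>\<alpha>\<in>multi_indices n. (if \<alpha> = (\<lambda>_. 0) then 1 else 0) * monomial \<alpha> z)"
  proof
    fix z :: "complex^'d"
    have "(\<Sum>\<alpha>\<in>multi_indices n. (if \<alpha> = (\<lambda>_. 0) then 1 else 0) * monomial \<alpha> z)
       = (\<Sum>\<alpha>\<in>multi_indices n. (if \<alpha> = (\<lambda>_. 0) then monomial \<alpha> z else 0))"
      by (rule sum.cong) auto
    also have "\<dots> = monomial (\<lambda>_. 0) z"
      using z finite_multi_indices[of n] by (subst sum.delta) auto
    also have "\<dots> = 1" by (simp add: monomial_def)
    finally show "1 = (\<Sum>\<alpha>\<in>multi_indices n. (if \<alpha> = (\<lambda>_. 0) then 1 else 0) * monomial \<alpha> z)" by simp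
  qed
  then show ?thesis unfolding polys_def mem_Collect_eq
    by (rule exI[of _ "\<lambda>\<alpha>. if \<alpha> = (\<lambda>_. 0) then 1 else 0"])
qed

lemma integral_pmf_nodes:
  fixes f :: "complex ^ 'd::finite \<Rightarrow> 'b::{banach, second_countable_topology}" and N :: nat
  assumes inj: "inj_on x {..<N}" and supp: "set_pmf \<nu> \<subseteq> x ` {..<N}"
  shows "(LINT z|measure_pmf \<nu>. f z) = (\<Sum>i<N. pmf \<nu> (x i) *\<^sub>R f (x i))"
proof -
  have "(LINT z|measure_pmf \<nu>. f z) = (\<Sum>a\<in>x ` {..<N}. pmf \<nu> a *\<^sub>R f a)"
    using integral_measure_pmf[of "x ` {..<N}" \<nu> f] supp by auto
  also have "\<dots> = (\<Sum>i<N. pmf \<nu> (x i) *\<^sub>R f (x i))"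
    by (subst sum.reindex[OF inj]) simp
  finally show ?thesis .
qed

lemma polys_scale:
  assumes "p \<in> polys n" shows "(\<lambda>z. c * p z) \<in> polys n"
  using polys_lincomb[of "{0::nat}" "\<lambda>_. p" n "\<lambda>_. c"] assms by simp

lemma ex1_eq: "\<exists>!q. P q \<Longrightarrow> P a \<Longrightarrow> P b \<Longrightarrow> a = b" by blast

locale lag =
  fixes n :: nat and x :: "nat \<Rightarrow> complex ^ 'd::finite" and L :: "nat \<Rightarrow> complex ^ 'd \<Rightarrow> complex"
  assumes distinct: "inj_on x {..<dimP TYPE('d) n}"
    and unisolvent: "\<forall>y :: nat \<Rightarrow> complex. \<exists>!p. p \<in> polys n \<and>
                        (\<forall>i < dimP TYPE('d) n. p (x i) = y i)"
    and lagrange_poly: "\<forall>i < dimP TYPE('d) n. L i \<in> polys n"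
    and lagrange_delta: "\<forall>i < dimP TYPE('d) n. \<forall>j < dimP TYPE('d) n.
                            L i (x j) = (if i = j then 1 else 0)"
begin


lemma interp:
  assumes p: "p \<in> polys n"
  shows "p = (\<lambda>z. \<Sum>i<dimP TYPE('d) n. p (x i) * L i z)"
proof -
  let ?r = "\<lambda>z. \<Sum>i<dimP TYPE('d) n. p (x i) * L i z"
  have r: "?r \<in> polys n" by (rule polys_lincomb) (use lagrange_poly in auto)
  have rv: "\<forall>j<dimP TYPE('d) n. ?r (x j) = p (x j)"
  proof (intro allI impI)
    fix j assume j: "j < dimP TYPE('d) n"
    have "?r (x j) = (\<Sum>i<dimP TYPE('d) n. if i = j then p (x i) else 0)"
      using j lagrange_delta by (intro sum.cong) auto
    also have "\<dots> = p (x j)" using j by (subst sum.delta) auto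
    finally show "?r (x j) = p (x j)" .
  qed
  have "\<exists>!q. q \<in> polys n \<and> (\<forall>i<dimP TYPE('d) n. q (x i) = p (x i))"
    by (rule spec[OF unisolvent, of "\<lambda>i. p (x i)", simplified])
  then have "p = ?r" by (rule ex1_eq) (use r rv p in simp_all)
  then show ?thesis .
qed

lemma sumL: "(\<Sum>i<dimP TYPE('d) n. L i z) = 1"
  using fun_cong[OF interp[OF const1_polys], of z] by simp

lemma ip_nodes:
  assumes supp: "set_pmf \<nu> \<subseteq> x ` {..<dimP TYPE('d) n}"
  shows "ip (measure_pmf \<nu>) p q = (\<Sum>i<dimP TYPE('d) n. complex_of_real (pmf \<nu> (x i)) * (p (x i) * cnj (q (x i))))"
  unfolding ip_def using integral_pmf_nodes[OF distinct supp, of "\<lambda>z. p z * cnj (q z)"]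
  by (simp add: scaleR_conv_of_real)

lemma norm_nodes:
  assumes supp: "set_pmf \<nu> \<subseteq> x ` {..<dimP TYPE('d) n}"
  shows "(LINT z|measure_pmf \<nu>. (cmod (p z))\<^sup>2) = (\<Sum>i<dimP TYPE('d) n. pmf \<nu> (x i) * (cmod (p (x i)))\<^sup>2)"
  using integral_pmf_nodes[OF distinct supp, of "\<lambda>z. (cmod (p z))\<^sup>2"] by simp

lemma pos:
  assumes supp: "set_pmf \<nu> \<subseteq> x ` {..<dimP TYPE('d) n}" and nd: "nondegenerate (measure_pmf \<nu>) n"
    and i: "i < dimP TYPE('d) n"
  shows "pmf \<nu> (x i) > 0"
proof -
  have Li: "L i \<in> polys n" using lagrange_poly i by auto
  have "L i (x i) = 1" using lagrange_delta i by auto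
  then have "L i \<noteq> (\<lambda>_. 0)" by auto
  with nd Li have gt: "(LINT z|measure_pmf \<nu>. (cmod (L i z))\<^sup>2) > 0"
    unfolding nondegenerate_def by blast
  have "(\<Sum>j<dimP TYPE('d) n. pmf \<nu> (x j) * (cmod (L i (x j)))\<^sup>2) = (\<Sum>j<dimP TYPE('d) n. if j = i then pmf \<nu> (x i) else 0)"
    using lagrange_delta i by (intro sum.cong) auto
  also have "\<dots> = pmf \<nu> (x i)" using i by (subst sum.delta) auto
  finally show ?thesis using gt norm_nodes[OF supp, of "L i"] by simp
qed

lemma sumv:
  assumes supp: "set_pmf \<nu> \<subseteq> x ` {..<dimP TYPE('d) n}"
  shows "(\<Sum>i<dimP TYPE('d) n. pmf \<nu> (x i)) = 1"
proof -
  have "(\<Sum>a\<in>x ` {..<dimP TYPE('d) n}. pmf \<nu> a) = 1" by (rule sum_pmf_eq_1) (use supp in auto)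
  then show ?thesis by (subst (asm) sum.reindex[OF distinct]) simp
qed

lemma onb:
  assumes supp: "set_pmf \<nu> \<subseteq> x ` {..<dimP TYPE('d) n}"
    and vpos: "\<forall>i<dimP TYPE('d) n. pmf \<nu> (x i) > 0"
  shows "is_onb (measure_pmf \<nu>) n (\<lambda>k z. L k z / complex_of_real (sqrt (pmf \<nu> (x k))))"
  unfolding is_onb_def
proof (intro conjI allI impI ballI)
  fix k assume k: "k < dimP TYPE('d) n"
  have "(\<lambda>z. (1 / complex_of_real (sqrt (pmf \<nu> (x k)))) * L k z) \<in> polys n"
    by (rule polys_scale) (use lagrange_poly k in auto)
  then show "(\<lambda>z. L k z / complex_of_real (sqrt (pmf \<nu> (x k)))) \<in> polys n" by simp
next
  fix k l assume k: "k < dimP TYPE('d) n" and l: "l < dimP TYPE('d) n"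
  define s where "s = (\<lambda>k. complex_of_real (sqrt (pmf \<nu> (x k))))"
  have cs: "cnj (s j) = s j" for j by (simp add: s_def)
  have "ip (measure_pmf \<nu>) (\<lambda>z. L k z / s k) (\<lambda>z. L l z / s l)
     = (\<Sum>j<dimP TYPE('d) n. complex_of_real (pmf \<nu> (x j)) * (L k (x j) / s k * cnj (L l (x j) / s l)))"
    by (rule ip_nodes[OF supp])
  also have "\<dots> = (\<Sum>j<dimP TYPE('d) n. if j = k then (if k = l then 1 else 0) else 0)"
  proof (rule sum.cong)
    fix j assume j: "j \<in> {..<dimP TYPE('d) n}"
    have vk: "pmf \<nu> (x k) > 0" using vpos k by auto
    have ss: "complex_of_real (pmf \<nu> (x k)) = s k * s k"
      using vk by (simp add: s_def flip: of_real_mult)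
    have sk: "s k \<noteq> 0" using vk by (simp add: s_def)
    show "complex_of_real (pmf \<nu> (x j)) * (L k (x j) / s k * cnj (L l (x j) / s l)) =
         (if j = k then (if k = l then 1 else 0) else 0)"
      using j k l lagrange_delta ss sk by (auto simp: cs)
  qed simp
  also have "\<dots> = (if k = l then 1 else 0)" using k by (subst sum.delta) auto
  finally show "ip (measure_pmf \<nu>) (\<lambda>z. L k z / complex_of_real (sqrt (pmf \<nu> (x k))))
      (\<lambda>z. L l z / complex_of_real (sqrt (pmf \<nu> (x l)))) = (if k = l then 1 else 0)"
    by (simp add: s_def)
next
  fix p :: "complex ^ 'd \<Rightarrow> complex" assume p: "p \<in> polys n"
  define s where "s = (\<lambda>k. complex_of_real (sqrt (pmf \<nu> (x k))))"
  have "p = (\<lambda>z. \<Sum>k<dimP TYPE('d) n. (p (x k) * s k) * (L k z / s k))"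
  proof -
    have "(\<lambda>z. \<Sum>k<dimP TYPE('d) n. (p (x k) * s k) * (L k z / s k))
        = (\<lambda>z. \<Sum>k<dimP TYPE('d) n. p (x k) * L k z)"
    proof (intro ext sum.cong refl)
      fix z k assume k: "k \<in> {..<dimP TYPE('d) n}"
      have "pmf \<nu> (x k) > 0" using vpos k by auto
      then have "s k \<noteq> 0" by (simp add: s_def)
      then show "(p (x k) * s k) * (L k z / s k) = p (x k) * L k z" by simp
    qed
    then show ?thesis using interp[OF p] by simp
  qed
  then show "\<exists>c. p = (\<lambda>z. \<Sum>k<dimP TYPE('d) n. c k * (L k z / complex_of_real (sqrt (pmf \<nu> (x k)))))"
    unfolding s_def by (rule exI[of _ "\<lambda>k. p (x k) * complex_of_real (sqrt (pmf \<nu> (x k)))"])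
qed

lemma Kn_formula:
  assumes supp: "set_pmf \<nu> \<subseteq> x ` {..<dimP TYPE('d) n}"
    and vpos: "\<forall>i<dimP TYPE('d) n. pmf \<nu> (x i) > 0"
  shows "Kn (measure_pmf \<nu>) n z = (\<Sum>i<dimP TYPE('d) n. (cmod (L i z))\<^sup>2 / pmf \<nu> (x i))"
proof -
  define q where "q = (SOME q. is_onb (measure_pmf \<nu>) n q)"
  have onbq: "is_onb (measure_pmf \<nu>) n q" unfolding q_def using onb[OF supp vpos] by (rule someI[where P="is_onb (measure_pmf \<nu>) n"])
  have Kq: "Kn (measure_pmf \<nu>) n z = (\<Sum>k<dimP TYPE('d) n. (cmod (q k z))\<^sup>2)"
    unfolding Kn_def q_def Let_def by simp
  from onbq have qo: "\<forall>k<dimP TYPE('d) n. \<forall>l<dimP TYPE('d) n. ip (measure_pmf \<nu>) (q k) (q l) = (if k = l then 1 else 0)"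
    and qs: "\<forall>p\<in>polys n. \<exists>c. p = (\<lambda>z. \<Sum>k<dimP TYPE('d) n. c k * q k z)"
    unfolding is_onb_def by blast+
  define V where "V = (\<lambda>i. complex_of_real (pmf \<nu> (x i)))"
  have cV: "cnj (V i) = V i" for i by (simp add: V_def)
  have ipn: "ip (measure_pmf \<nu>) p r = (\<Sum>i<dimP TYPE('d) n. V i * (p (x i) * cnj (r (x i))))" for p r
    unfolding V_def by (rule ip_nodes[OF supp])
  have qo': "(\<Sum>i<dimP TYPE('d) n. V i * (q k (x i) * cnj (q l (x i)))) = (if k = l then 1 else 0)"
    if "k < dimP TYPE('d) n" "l < dimP TYPE('d) n" for k l
    using qo that by (simp add: ipn)
  have A: "L i z = V i * (\<Sum>k<dimP TYPE('d) n. cnj (q k (x i)) * q k z)"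
    if i: "i < dimP TYPE('d) n" for i z
  proof -
    have "L i \<in> polys n" using lagrange_poly i by auto
    then obtain c where c: "L i = (\<lambda>z. \<Sum>k<dimP TYPE('d) n. c k * q k z)" using qs by blast
    have cl: "c l = V i * cnj (q l (x i))" if l: "l < dimP TYPE('d) n" for l
    proof -
      have "ip (measure_pmf \<nu>) (L i) (q l) = (\<Sum>j<dimP TYPE('d) n. V j * (L i (x j) * cnj (q l (x j))))"
        by (rule ipn)
      also have "\<dots> = (\<Sum>j<dimP TYPE('d) n. if j = i then V i * cnj (q l (x i)) else 0)"
        using lagrange_delta i by (intro sum.cong) auto
      also have "\<dots> = V i * cnj (q l (x i))" using i by (subst sum.delta) auto
      finally have e1: "ip (measure_pmf \<nu>) (L i) (q l) = V i * cnj (q l (x i))" .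
      have "ip (measure_pmf \<nu>) (L i) (q l)
          = (\<Sum>j<dimP TYPE('d) n. V j * ((\<Sum>k<dimP TYPE('d) n. c k * q k (x j)) * cnj (q l (x j))))"
        by (subst ipn) (simp add: c)
      also have "\<dots> = (\<Sum>j<dimP TYPE('d) n. \<Sum>k<dimP TYPE('d) n. c k * (V j * (q k (x j) * cnj (q l (x j)))))"
        by (simp add: sum_distrib_left sum_distrib_right mult_ac)
      also have "\<dots> = (\<Sum>k<dimP TYPE('d) n. \<Sum>j<dimP TYPE('d) n. c k * (V j * (q k (x j) * cnj (q l (x j)))))"
        by (rule sum.swap)
      also have "\<dots> = (\<Sum>k<dimP TYPE('d) n. c k * (\<Sum>j<dimP TYPE('d) n. V j * (q k (x j) * cnj (q l (x j)))))"
        by (simp add: sum_distrib_left)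
      also have "\<dots> = (\<Sum>k<dimP TYPE('d) n. if k = l then c k else 0)"
        using qo' l by (intro sum.cong) auto
      also have "\<dots> = c l" using l by (subst sum.delta) auto
      finally show ?thesis using e1 by simp
    qed
    have "L i z = (\<Sum>k<dimP TYPE('d) n. c k * q k z)" using c by simp
    also have "\<dots> = (\<Sum>k<dimP TYPE('d) n. V i * (cnj (q k (x i)) * q k z))"
      using cl by (intro sum.cong) auto
    also have "\<dots> = V i * (\<Sum>k<dimP TYPE('d) n. cnj (q k (x i)) * q k z)"
      by (simp add: sum_distrib_left)
    finally show ?thesis .
  qed
  have "complex_of_real (\<Sum>i<dimP TYPE('d) n. (cmod (L i z))\<^sup>2 / pmf \<nu> (x i))
      = (\<Sum>i<dimP TYPE('d) n. V i * ((\<Sum>k<dimP TYPE('d) n. cnj (q k (x i)) * q k z)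
                                   * (\<Sum>l<dimP TYPE('d) n. q l (x i) * cnj (q l z))))"
    unfolding of_real_sum
  proof (rule sum.cong)
    fix i assume i: "i \<in> {..<dimP TYPE('d) n}"
    define a where "a = (\<Sum>k<dimP TYPE('d) n. cnj (q k (x i)) * q k z)"
    have ca: "cnj a = (\<Sum>l<dimP TYPE('d) n. q l (x i) * cnj (q l z))"
      unfolding a_def by (simp add: cnj_sum)
    have Vi: "V i \<noteq> 0" using vpos i by (auto simp: V_def)
    have "complex_of_real ((cmod (L i z))\<^sup>2 / pmf \<nu> (x i)) = L i z * cnj (L i z) / V i"
      using complex_norm_square[of "L i z"] by (simp add: V_def)
    also have "\<dots> = V i * (a * cnj a)"
    proof -
      have La: "L i z = V i * a" using A[of i z] i by (simp add: a_def)
      show ?thesis unfolding La complex_cnj_mult cV using Vi by (simp add: field_simps)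
    qed
    finally show "complex_of_real ((cmod (L i z))\<^sup>2 / pmf \<nu> (x i)) =
       V i * ((\<Sum>k<dimP TYPE('d) n. cnj (q k (x i)) * q k z) * (\<Sum>l<dimP TYPE('d) n. q l (x i) * cnj (q l z)))"
      using ca by (simp add: a_def)
  qed simp
  also have "\<dots> = (\<Sum>i<dimP TYPE('d) n. \<Sum>k<dimP TYPE('d) n. \<Sum>l<dimP TYPE('d) n.
                     V i * (cnj (q k (x i)) * q k z * (q l (x i) * cnj (q l z))))"
    by (intro sum.cong refl) (subst sum_product, simp only: sum_distrib_left)
  also have "\<dots> = (\<Sum>k<dimP TYPE('d) n. \<Sum>i<dimP TYPE('d) n. \<Sum>l<dimP TYPE('d) n.
                     V i * (cnj (q k (x i)) * q k z * (q l (x i) * cnj (q l z))))"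
    by (rule sum.swap)
  also have "\<dots> = (\<Sum>k<dimP TYPE('d) n. \<Sum>l<dimP TYPE('d) n. \<Sum>i<dimP TYPE('d) n.
                     V i * (cnj (q k (x i)) * q k z * (q l (x i) * cnj (q l z))))"
    by (intro sum.cong refl sum.swap)
  also have "\<dots> = (\<Sum>k<dimP TYPE('d) n. \<Sum>l<dimP TYPE('d) n.
                     (q k z * cnj (q l z)) * (\<Sum>i<dimP TYPE('d) n. V i * (q l (x i) * cnj (q k (x i)))))"
    by (intro sum.cong refl) (simp add: sum_distrib_left mult_ac)
  also have "\<dots> = (\<Sum>k<dimP TYPE('d) n. \<Sum>l<dimP TYPE('d) n. if l = k then q k z * cnj (q k z) else 0)"
    using qo' by (intro sum.cong refl) auto
  also have "\<dots> = (\<Sum>k<dimP TYPE('d) n. q k z * cnj (q k z))"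
    by (intro sum.cong refl) (subst sum.delta, auto)
  also have "\<dots> = complex_of_real (\<Sum>k<dimP TYPE('d) n. (cmod (q k z))\<^sup>2)"
    unfolding of_real_sum by (intro sum.cong refl) (rule complex_norm_square[symmetric])
  finally show ?thesis using Kq by (simp only: of_real_eq_iff)
qed

end



theorem mainTheorem1:
  fixes n :: nat
    and x :: "nat \<Rightarrow> complex ^ 'd::finite"
    and L :: "nat \<Rightarrow> complex ^ 'd \<Rightarrow> complex"
    and z0 :: "complex ^ 'd"
    and w :: "nat \<Rightarrow> real"
  assumes distinct: "inj_on x {..<dimP TYPE('d) n}"
    and unisolvent: "\<forall>y :: nat \<Rightarrow> complex. \<exists>!p. p \<in> polys n \<and>
                        (\<forall>i < dimP TYPE('d) n. p (x i) = y i)"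
    and lagrange_poly: "\<forall>i < dimP TYPE('d) n. L i \<in> polys n"
    and lagrange_delta: "\<forall>i < dimP TYPE('d) n. \<forall>j < dimP TYPE('d) n.
                            L i (x j) = (if i = j then 1 else 0)"
    and z0_notin: "z0 \<notin> x ` {..<dimP TYPE('d) n}"
    and w_def: "\<forall>i. w i = cmod (L i z0) / (\<Sum>j < dimP TYPE('d) n. cmod (L j z0))"
  shows "\<forall>\<mu> \<nu> :: (complex ^ 'd) pmf.
           (\<forall>i < dimP TYPE('d) n. pmf \<mu> (x i) = w i) \<longrightarrow>
           set_pmf \<nu> \<subseteq> x ` {..<dimP TYPE('d) n} \<longrightarrow>
           nondegenerate (measure_pmf \<mu>) n \<longrightarrow>
           nondegenerate (measure_pmf \<nu>) n \<longrightarrow>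
           Kn (measure_pmf \<mu>) n z0 \<le> Kn (measure_pmf \<nu>) n z0"
  proof (intro allI impI)
  fix \<mu> \<nu> :: "(complex ^ 'd) pmf"
  assume wmu: "\<forall>i < dimP TYPE('d) n. pmf \<mu> (x i) = w i"
    and suppnu: "set_pmf \<nu> \<subseteq> x ` {..<dimP TYPE('d) n}"
    and ndmu: "nondegenerate (measure_pmf \<mu>) n"
    and ndnu: "nondegenerate (measure_pmf \<nu>) n"
  interpret lag n x L using distinct unisolvent lagrange_poly lagrange_delta by (rule lag.intro)
  define a where "a = (\<lambda>i. cmod (L i z0))"
  define S where "S = (\<Sum>j<dimP TYPE('d) n. a j)"
  have "1 = cmod (\<Sum>i<dimP TYPE('d) n. L i z0)" using sumL by simp
  also have "\<dots> \<le> S" unfolding S_def a_def by (rule norm_sum)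
  finally have S1: "1 \<le> S" .
  have wS: "w i = a i / S" for i using w_def by (simp add: a_def S_def)
  have swmu: "(\<Sum>i<dimP TYPE('d) n. pmf \<mu> (x i)) = 1"
  proof -
    have "(\<Sum>i<dimP TYPE('d) n. pmf \<mu> (x i)) = (\<Sum>i<dimP TYPE('d) n. a i / S)"
      using wmu wS by (intro sum.cong) auto
    also have "\<dots> = S / S" unfolding S_def by (rule sum_divide_distrib[symmetric])
    also have "\<dots> = 1" using S1 by simp
    finally show ?thesis .
  qed
  have suppmu: "set_pmf \<mu> \<subseteq> x ` {..<dimP TYPE('d) n}"
  proof -
    have "measure (measure_pmf \<mu>) (x ` {..<dimP TYPE('d) n}) = (\<Sum>y\<in>x ` {..<dimP TYPE('d) n}. pmf \<mu> y)"
      by (rule measure_measure_pmf_finite) simp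
    also have "\<dots> = 1" using swmu by (subst sum.reindex[OF distinct]) simp
    finally have "measure (measure_pmf \<mu>) (x ` {..<dimP TYPE('d) n}) = 1" .
    then have "AE y in measure_pmf \<mu>. y \<in> x ` {..<dimP TYPE('d) n}"
      by (subst (asm) measure_pmf.prob_eq_1) simp_all
    then show ?thesis by (auto simp: AE_measure_pmf_iff)
  qed
  have mupos: "\<forall>i<dimP TYPE('d) n. pmf \<mu> (x i) > 0" using pos[OF suppmu ndmu] by blast
  have nupos: "\<forall>i<dimP TYPE('d) n. pmf \<nu> (x i) > 0" using pos[OF suppnu ndnu] by blast
  have "Kn (measure_pmf \<mu>) n z0 = (\<Sum>i<dimP TYPE('d) n. (a i)\<^sup>2 / pmf \<mu> (x i))"
    unfolding a_def by (rule Kn_formula[OF suppmu mupos])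
  also have "\<dots> = (\<Sum>i<dimP TYPE('d) n. a i * S)"
  proof (rule sum.cong)
    fix i assume i: "i \<in> {..<dimP TYPE('d) n}"
    have wi: "pmf \<mu> (x i) = a i / S" using wmu wS i by auto
    have "a i / S > 0" using mupos i wi by auto
    then have "a i > 0" using S1 by (simp add: zero_less_divide_iff)
    then show "(a i)\<^sup>2 / pmf \<mu> (x i) = a i * S" unfolding wi using S1 by (simp add: power2_eq_square field_simps)
  qed simp
  also have "\<dots> = S * S" by (simp add: S_def sum_distrib_right)
  finally have Kmu: "Kn (measure_pmf \<mu>) n z0 = S * S" .
  have "S * S = (\<Sum>i<dimP TYPE('d) n. 2 * S * a i - S * S * pmf \<nu> (x i))"
    using sumv[OF suppnu] by (simp add: sum_subtractf S_def sum_distrib_left[symmetric])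
  also have "\<dots> \<le> (\<Sum>i<dimP TYPE('d) n. (a i)\<^sup>2 / pmf \<nu> (x i))"
  proof (rule sum_mono)
    fix i assume i: "i \<in> {..<dimP TYPE('d) n}"
    define v where "v = pmf \<nu> (x i)"
    have v: "v > 0" using nupos i by (auto simp: v_def)
    have "(a i)\<^sup>2 / v - (2 * S * a i - S * S * v) = (a i - S * v)\<^sup>2 / v"
      using v by (simp add: field_simps power2_eq_square)
    also have "\<dots> \<ge> 0" using v by simp
    finally show "2 * S * a i - S * S * pmf \<nu> (x i) \<le> (a i)\<^sup>2 / pmf \<nu> (x i)"
      by (simp add: v_def)
  qed
  also have "\<dots> = Kn (measure_pmf \<nu>) n z0"
    unfolding a_def by (rule Kn_formula[OF suppnu nupos, symmetric])
  finally show "Kn (measure_pmf \<mu>) n z0 \<le> Kn (measure_pmf \<nu>) n z0" using Kmu by simp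
qed

end
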